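(* Let $E$ be a congruence on $\overline{\boldsymbol{T}(X_1,\ldots,X_n)}$, $F$ a congruence on $\overline{\boldsymbol{T}(Y_1,\ldots,Y_m)}$, $V:=\boldsymbol{V}(E)$, $W:=\boldsymbol{V}(F)$, and let $\psi:\overline{\boldsymbol{T}(X_1,\ldots,X_n)}/E\to\overline{\boldsymbol{T}(Y_1,\ldots,Y_m)}/F$ be a $\boldsymbol{T}$-algebra homomorphism. If $\psi$ is injective and $F=\boldsymbol{E}(W)$, then $E=\boldsymbol{E}(V)$. In particular, when $\overline{\boldsymbol{T}(X_1,\ldots,X_n)}/E$ is isomorphic to $\overline{\boldsymbol{T}(Y_1,\ldots,Y_m)}/F$ as a $\boldsymbol{T}$-algebra, $E=\boldsymbol{E}(\boldsymbol{V}(E))$ if and only if $F=\boldsymbol{E}(\boldsymbol{V}(F))$.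
   Context: $\boldsymbol{T}=\mathbb{R}\cup\{-\infty\}$ with $a\oplus b=\max\{a,b\}$, $a\odot b=a+b$. $\overline{\boldsymbol{T}[X_1,\ldots,X_n]}$ is the tropical polynomial semiring modulo identifying polynomials defining the same function $\boldsymbol{T}^n\to\boldsymbol{T}$; it is cancellative and $\overline{\boldsymbol{T}(X_1,\ldots,X_n)}$ is its semifield of fractions. Each element defines a function $\mathbb{R}^n\to\boldsymbol{T}$ (quotients evaluated as differences). $\boldsymbol{T}$-algebras are semirings with a semiring homomorphism from $\boldsymbol{T}$; homomorphisms are compatible semiring homomorphisms. A congruence is an equivalence relation compatible with both operations. $\boldsymbol{V}(E)=\{x\in\mathbb{R}^n\mid f(x)=g(x)\ \forall(f,g)\in E\}$; for $V\subset\mathbb{R}^n$, $\boldsymbol{E}(V)=\{(f,g)\mid f(x)=g(x)\ \forall x\in V\}$. Elements of $\overline{\boldsymbol{T}(Y_1,\ldots,Y_m)}/F$ are evaluated at points of $\boldsymbol{V}(F)$ via representatives. *)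

theory Defs
  imports "HOL-Analysis.Analysis"
begin

text \<open>The tropical semifield T = R \<union> {-\<infinity>} is modelled inside ereal
 (the value \<infinity> never occurs). max is tropical addition, + is tropical
 multiplication.\<close>

type_synonym 'n tfun = "real^'n \<Rightarrow> ereal"

definition trop_poly :: "'n::finite tfun \<Rightarrow> bool" where
  "trop_poly f \<longleftrightarrow> (\<exists>A :: (('n \<Rightarrow> nat) \<times> real) set. finite A \<and>
      f = (\<lambda>x. SUP p\<in>A. ereal (snd p + (\<Sum>i\<in>UNIV. real (fst p i) * x $ i))))"

text \<open>Carrier of the semifield of fractions, identified with the functions
 R^n -> T defined by its elements: quotients p/q, q nonzero, evaluated as p - q.\<close>
definition trat :: "'n::finite tfun set" where
  "trat = {f. \<exists>p q. trop_poly p \<and> trop_poly q \<and> q \<noteq> (\<lambda>_. -\<infinity>) \<and>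
                    f = (\<lambda>x. p x - q x)}"

definition tadd :: "'n tfun \<Rightarrow> 'n tfun \<Rightarrow> 'n tfun" where
  "tadd f g = (\<lambda>x. max (f x) (g x))"

definition tmul :: "'n tfun \<Rightarrow> 'n tfun \<Rightarrow> 'n tfun" where
  "tmul f g = (\<lambda>x. f x + g x)"

definition trop_congruence :: "('n::finite tfun \<times> 'n tfun) set \<Rightarrow> bool" where
  "trop_congruence E \<longleftrightarrow> equiv trat E \<and>
     (\<forall>a b c d. (a, b) \<in> E \<longrightarrow> (c, d) \<in> E \<longrightarrow>
        (tadd a c, tadd b d) \<in> E \<and> (tmul a c, tmul b d) \<in> E)"

definition Vset :: "('n::finite tfun \<times> 'n tfun) set \<Rightarrow> (real^'n) set" where
  "Vset E = {x. \<forall>(f, g)\<in>E. f x = g x}"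

definition Eset :: "(real^'n::finite) set \<Rightarrow> ('n tfun \<times> 'n tfun) set" where
  "Eset V = {(f, g). f \<in> trat \<and> g \<in> trat \<and> (\<forall>x\<in>V. f x = g x)}"

text \<open>The quotient operations are [a] + [b] = [a + b], [a][b] = [ab], and the
 structure map T -> trat/E is t \<mapsto> [constant t].\<close>
definition trop_alg_hom ::
  "('n::finite tfun \<times> 'n tfun) set \<Rightarrow> ('m::finite tfun \<times> 'm tfun) set \<Rightarrow>
   ('n tfun set \<Rightarrow> 'm tfun set) \<Rightarrow> bool" where
  "trop_alg_hom E F \<psi> \<longleftrightarrow>
     \<psi> \<in> trat // E \<rightarrow> trat // F \<and>
     (\<forall>t::ereal. t \<noteq> \<infinity> \<longrightarrow> \<psi> (E `` {\<lambda>_. t}) = F `` {\<lambda>_. t}) \<and>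
     (\<forall>a\<in>trat. \<forall>b\<in>trat. \<forall>y\<in>\<psi> (E `` {a}). \<forall>z\<in>\<psi> (E `` {b}).
        \<psi> (E `` {tadd a b}) = F `` {tadd y z} \<and>
        \<psi> (E `` {tmul a b}) = F `` {tmul y z})"

end

theory Submission
  imports Defs
begin

definition tmono :: "('n::finite \<Rightarrow> nat) \<Rightarrow> real \<Rightarrow> 'n tfun" where
  "tmono a c = (\<lambda>x. ereal (c + (\<Sum>i\<in>UNIV. real (a i) * x $ i)))"

lemma SUP_fin_real:
  assumes "finite A" "A \<noteq> {}"
  shows "\<exists>r. (SUP p\<in>A. ereal (g p)) = ereal r"
  using assms
proof (induction A rule: finite_ne_induct)
  case (singleton x) then show ?case by simp
next
  case (insert x F)
  then obtain r where "(SUP p\<in>F. ereal (g p)) = ereal r" by blast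
  then show ?case by (simp add: sup_max max_def)
qed

lemma trop_poly_tmono: "trop_poly (tmono a c)"
  unfolding trop_poly_def tmono_def
  by (rule exI[of _ "{(a,c)}"]) simp

lemma trop_poly_val:
  assumes "trop_poly p"
  shows "p x \<noteq> \<infinity>" "p \<noteq> (\<lambda>_. -\<infinity>) \<Longrightarrow> \<exists>r. p x = ereal r"
proof -
  obtain A where A: "finite A" "p = (\<lambda>x. SUP p\<in>A. ereal (snd p + (\<Sum>i\<in>UNIV. real (fst p i) * x $ i)))"
    using assms unfolding trop_poly_def by blast
  show "p x \<noteq> \<infinity>"
  proof (cases "A = {}")
    case True then show ?thesis using A by (simp add: bot_ereal_def)
  next
    case False
    obtain r where "(SUP p\<in>A. ereal (snd p + (\<Sum>i\<in>UNIV. real (fst p i) * x $ i))) = ereal r"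
      using SUP_fin_real[of A "\<lambda>p. snd p + (\<Sum>i\<in>UNIV. real (fst p i) * x $ i)", OF A(1) False] by blast
    then show ?thesis using A(2) by simp
  qed
  assume "p \<noteq> (\<lambda>_. -\<infinity>)"
  then have "A \<noteq> {}" using A by (auto simp: bot_ereal_def)
  then obtain r where "(SUP p\<in>A. ereal (snd p + (\<Sum>i\<in>UNIV. real (fst p i) * x $ i))) = ereal r"
      using SUP_fin_real[of A "\<lambda>p. snd p + (\<Sum>i\<in>UNIV. real (fst p i) * x $ i)", OF A(1)] by blast
  then show "\<exists>r. p x = ereal r" using A(2) by simp
qed

lemma poly_trat: "trop_poly p \<Longrightarrow> p \<in> trat"
  unfolding trat_def
  apply (rule CollectI, rule exI[of _ p], rule exI[of _ "tmono (\<lambda>_. 0) 0"])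
  using trop_poly_tmono[of "\<lambda>_. 0" 0] by (auto simp: tmono_def zero_ereal_def[symmetric] fun_eq_iff)

lemma trat_val: "h \<in> trat \<Longrightarrow> h x \<noteq> \<infinity>"
proof -
  assume "h \<in> trat"
  then obtain p q where pq: "trop_poly p" "trop_poly q" "q \<noteq> (\<lambda>_. -\<infinity>)" "h = (\<lambda>x. p x - q x)"
    unfolding trat_def by blast
  obtain r where "q x = ereal r" using trop_poly_val(2)[OF pq(2,3)] by blast
  moreover have "p x \<noteq> \<infinity>" using trop_poly_val(1)[OF pq(1)] .
  ultimately show ?thesis using pq(4) by (cases "p x") auto
qed

lemma const_trat: "t \<noteq> \<infinity> \<Longrightarrow> (\<lambda>_::real^'n::finite. t) \<in> trat"
proof -
  assume "t \<noteq> \<infinity>"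
  then consider r where "t = ereal r" | "t = -\<infinity>" by (cases t) auto
  then show ?thesis
  proof cases
    case 1
    have "tmono (\<lambda>_::'n. 0) r = (\<lambda>_. t)" using 1 by (simp add: tmono_def)
    then show ?thesis using poly_trat[OF trop_poly_tmono[of "\<lambda>_. 0" r]] by metis
  next
    case 2
    have "trop_poly (\<lambda>_. t)" unfolding trop_poly_def using 2
      by (intro exI[of _ "{}"]) (auto simp: bot_ereal_def)
    then show ?thesis using poly_trat by blast
  qed
qed

lemma sum_e: "(\<Sum>j\<in>UNIV. real (if j = i then 1 else 0) * (x::real^'n::finite) $ j) = x $ i"
proof -
  have "(\<Sum>j\<in>UNIV. real (if j = i then 1 else 0) * x $ j) = (\<Sum>j\<in>UNIV. if j = i then x $ j else 0)"
    by (rule sum.cong) auto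
  then show ?thesis by simp
qed

lemma tmono_split:
  fixes a :: "'n::finite \<Rightarrow> nat"
  assumes "\<And>j. a j = a' j + (if j = i then 1 else 0)"
  shows "tmono a c = tmul (tmono a' c) (tmono (\<lambda>j. if j = i then 1 else 0) 0)"
proof -
  have "(\<Sum>j\<in>UNIV. real (a j) * x $ j) = (\<Sum>j\<in>UNIV. real (a' j) * x $ j) + x $ i" for x :: "real^'n"
  proof -
    have "(\<Sum>j\<in>UNIV. real (a j) * x $ j) = (\<Sum>j\<in>UNIV. real (a' j) * x $ j + real (if j = i then 1 else 0) * x $ j)"
      by (rule sum.cong) (auto simp: assms algebra_simps)
    also have "\<dots> = (\<Sum>j\<in>UNIV. real (a' j) * x $ j) + x $ i"
      by (simp only: sum.distrib sum_e)
    finally show ?thesis .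
  qed
  then show ?thesis by (auto simp: tmono_def tmul_def fun_eq_iff sum_e)
qed

lemma eval_point:
  fixes \<phi> :: "'n::finite tfun \<Rightarrow> ereal"
  assumes const: "\<And>t. t \<noteq> \<infinity> \<Longrightarrow> \<phi> (\<lambda>_. t) = t"
  and add: "\<And>a b. a\<in>trat \<Longrightarrow> b\<in>trat \<Longrightarrow> \<phi> (tadd a b) = max (\<phi> a) (\<phi> b)"
  and mul: "\<And>a b. a\<in>trat \<Longrightarrow> b\<in>trat \<Longrightarrow> \<phi> (tmul a b) = \<phi> a + \<phi> b"
  and fin: "\<And>a. a\<in>trat \<Longrightarrow> \<phi> a \<noteq> \<infinity>"
  shows "\<exists>x. \<forall>h\<in>trat. \<phi> h = h x"
proof -
  define e :: "'n \<Rightarrow> 'n \<Rightarrow> nat" where "e i = (\<lambda>j. if j = i then 1 else 0)" for i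
  have Xfin: "\<exists>r. \<phi> (tmono (e i) 0) = ereal r" for i
  proof -
    define Xi where "Xi = (\<lambda>x. tmono (\<lambda>_. 0) 0 x - tmono (e i) 0 x)"
    have "Xi \<in> trat" unfolding trat_def Xi_def
      apply (rule CollectI, rule exI[of _ "tmono (\<lambda>_. 0) 0"], rule exI[of _ "tmono (e i) 0"])
      using trop_poly_tmono[of "\<lambda>_::'n. 0" 0] trop_poly_tmono[of "e i" 0]
      by (auto simp del: sum.neutral_const simp add: tmono_def fun_eq_iff)
    have X: "tmono (e i) 0 \<in> trat" by (rule poly_trat[OF trop_poly_tmono])
    have "tmul (tmono (e i) 0) Xi = (\<lambda>_. 0)"
      by (auto simp: tmul_def Xi_def tmono_def fun_eq_iff zero_ereal_def)
    then have "\<phi> (tmono (e i) 0) + \<phi> Xi = 0"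
      using mul[OF X \<open>Xi \<in> trat\<close>] const[of 0] by simp
    moreover have "\<phi> (tmono (e i) 0) \<noteq> \<infinity>" "\<phi> Xi \<noteq> \<infinity>" using fin X \<open>Xi \<in> trat\<close> by auto
    ultimately show ?thesis by (cases "\<phi> (tmono (e i) 0)"; cases "\<phi> Xi") auto
  qed
  define x :: "real^'n" where "x = (\<chi> i. real_of_ereal (\<phi> (tmono (e i) 0)))"
  have xi: "\<phi> (tmono (e i) 0) = ereal (x $ i)" for i
    using Xfin[of i] unfolding x_def by auto
  have mono: "\<forall>a c. sum a UNIV = k \<longrightarrow> \<phi> (tmono a c) = tmono a c x" for k
  proof (induction k)
    case 0
    show ?case
    proof (intro allI impI)
      fix a :: "'n \<Rightarrow> nat" and c assume "sum a UNIV = 0"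
      then have "a = (\<lambda>_. 0)" by (auto simp: fun_eq_iff)
      then have "tmono a c = (\<lambda>_. ereal c)" by (simp add: tmono_def)
      then show "\<phi> (tmono a c) = tmono a c x" using const[of "ereal c"] by simp
    qed
  next
    case (Suc k)
    show ?case
    proof (intro allI impI)
      fix a :: "'n \<Rightarrow> nat" and c assume s: "sum a UNIV = Suc k"
      have "\<exists>i. a i > 0"
      proof (rule ccontr)
        assume "\<not> (\<exists>i. a i > 0)"
        then have "\<forall>i\<in>UNIV. a i = 0" by auto
        then have "sum a UNIV = 0" by (rule sum.neutral)
        then show False using s by simp
      qed
      then obtain i where "a i > 0" by blast
      define a' where "a' = (\<lambda>j. a j - e i j)"
      have aa: "a j = a' j + (if j = i then 1 else 0)" for j
        using \<open>a i > 0\<close> by (auto simp: a'_def e_def)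
      have "sum a UNIV = sum a' UNIV + sum (e i) UNIV"
        by (simp add: aa sum.distrib e_def)
      moreover have "sum (e i) UNIV = 1" by (simp add: e_def)
      ultimately have "sum a' UNIV = k" using s by simp
      then have IH: "\<phi> (tmono a' c) = tmono a' c x" using Suc.IH by blast
      have sp: "tmono a c = tmul (tmono a' c) (tmono (e i) 0)"
        using tmono_split[OF aa] unfolding e_def by simp
      have "\<phi> (tmono a c) = \<phi> (tmono a' c) + \<phi> (tmono (e i) 0)"
        unfolding sp by (rule mul) (rule poly_trat[OF trop_poly_tmono])+
      also have "\<dots> = tmul (tmono a' c) (tmono (e i) 0) x"
        using IH xi[of i] sum_e[of i x]
        by (simp add: tmul_def tmono_def e_def)
      finally show "\<phi> (tmono a c) = tmono a c x" using sp by simp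
    qed
  qed
  have poly: "finite A \<Longrightarrow> \<phi> (\<lambda>y. SUP p\<in>A. ereal (snd p + (\<Sum>i\<in>UNIV. real (fst p i) * y $ i)))
      = (SUP p\<in>A. ereal (snd p + (\<Sum>i\<in>UNIV. real (fst p i) * x $ i)))" for A
  proof (induction A rule: finite_induct)
    case empty
    then show ?case using const[of "-\<infinity>"] by (simp add: bot_ereal_def)
  next
    case (insert p A)
    have tp: "trop_poly (\<lambda>y. SUP p\<in>A. ereal (snd p + (\<Sum>i\<in>UNIV. real (fst p i) * y $ i)))"
      unfolding trop_poly_def using insert(1) by blast
    have eq: "(\<lambda>y. SUP p\<in>insert p A. ereal (snd p + (\<Sum>i\<in>UNIV. real (fst p i) * y $ i)))
       = tadd (tmono (fst p) (snd p)) (\<lambda>y. SUP p\<in>A. ereal (snd p + (\<Sum>i\<in>UNIV. real (fst p i) * y $ i)))"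
      by (simp add: tadd_def tmono_def fun_eq_iff sup_max)
    show ?case unfolding eq
      apply (subst add)
      using poly_trat[OF trop_poly_tmono] poly_trat[OF tp] insert(3) mono
      by (auto simp: sup_max tmono_def)
  qed
  have polyp: "trop_poly p \<Longrightarrow> \<phi> p = p x" for p
    unfolding trop_poly_def using poly by auto
  show ?thesis
  proof (intro exI ballI)
    fix h :: "'n tfun" assume "h \<in> trat"
    then obtain p q where pq: "trop_poly p" "trop_poly q" "q \<noteq> (\<lambda>_. -\<infinity>)" "h = (\<lambda>x. p x - q x)"
      unfolding trat_def by blast
    have qr: "\<exists>r. q y = ereal r" for y using trop_poly_val(2)[OF pq(2,3)] .
    have "tmul h q = p"
    proof
      fix y obtain r where "q y = ereal r" using qr by blast
      then show "tmul h q y = p y" by (cases "p y") (simp_all add: tmul_def pq(4))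
    qed
    then have "\<phi> h + \<phi> q = \<phi> p" using mul[OF \<open>h \<in> trat\<close> poly_trat[OF pq(2)]] by simp
    then have "\<phi> h + q x = p x" using polyp pq by simp
    moreover obtain r where "q x = ereal r" using qr by blast
    moreover have "h x = p x - q x" by (simp add: pq(4))
    ultimately show "\<phi> h = h x"
      by (cases "\<phi> h"; cases "p x") auto
  qed
qed

lemma cong_closed:
  assumes "trop_congruence E" "a \<in> trat" "b \<in> trat"
  shows "tadd a b \<in> trat" "tmul a b \<in> trat" "(tadd a b, tadd a b) \<in> E" "(tmul a b, tmul a b) \<in> E"
proof -
  have eq: "equiv trat E" using assms(1) unfolding trop_congruence_def by blast
  have "(a,a) \<in> E" "(b,b) \<in> E" using eq assms(2,3) by (auto simp: equiv_def refl_on_def)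
  then show "(tadd a b, tadd a b) \<in> E" "(tmul a b, tmul a b) \<in> E"
    using assms(1) unfolding trop_congruence_def by blast+
  then show "tadd a b \<in> trat" "tmul a b \<in> trat" using equiv_type[OF eq] by auto
qed

lemma part1:
  fixes E :: "('n::finite tfun \<times> 'n tfun) set" and F :: "('m::finite tfun \<times> 'm tfun) set"
  assumes cE: "trop_congruence E" and cF: "trop_congruence F" and hom: "trop_alg_hom E F \<psi>"
    and inj: "inj_on \<psi> (trat // E)" and FW: "F = Eset (Vset F)"
  shows "E = Eset (Vset E)"
proof
  have eqE: "equiv trat E" using cE unfolding trop_congruence_def by blast
  have eqF: "equiv trat F" using cF unfolding trop_congruence_def by blast
  have maps: "\<psi> \<in> trat // E \<rightarrow> trat // F" using hom unfolding trop_alg_hom_def by blast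
  show "E \<subseteq> Eset (Vset E)"
    using equiv_type[OF eqE] unfolding Eset_def Vset_def by auto
  show "Eset (Vset E) \<subseteq> E"
  proof (rule subrelI, rule ccontr)
    fix f g assume fg: "(f, g) \<in> Eset (Vset E)" and nfg: "(f, g) \<notin> E"
    have f: "f \<in> trat" and g: "g \<in> trat" and agree: "\<forall>x\<in>Vset E. f x = g x"
      using fg unfolding Eset_def by auto
    have "E``{f} \<noteq> E``{g}" using nfg eq_equiv_class_iff[OF eqE f g] by blast
    then have "\<psi> (E``{f}) \<noteq> \<psi> (E``{g})"
      using inj quotientI[OF f] quotientI[OF g] by (metis inj_on_eq_iff)
    moreover obtain y where y: "y \<in> trat" "\<psi> (E``{f}) = F``{y}"
      using maps quotientI[OF f] by (metis Pi_iff quotientE)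
    moreover obtain z where z: "z \<in> trat" "\<psi> (E``{g}) = F``{z}"
      using maps quotientI[OF g] by (metis Pi_iff quotientE)
    ultimately have "(y, z) \<notin> F" using eq_equiv_class_iff[OF eqF] by blast
    then have "(y, z) \<notin> Eset (Vset F)" using FW by simp
    then obtain w where w: "w \<in> Vset F" "y w \<noteq> z w" using y z unfolding Eset_def by auto
    define \<phi> where "\<phi> h = (SOME s. s \<in> \<psi> (E``{h})) w" for h
    have cls: "\<phi> h = s w" if h: "h \<in> trat" and s: "s \<in> \<psi> (E``{h})" for h s
    proof -
      obtain u where u: "\<psi> (E``{h}) = F``{u}" using maps quotientI[OF h] by (metis Pi_iff quotientE)
      have "(SOME s. s \<in> \<psi> (E``{h})) \<in> \<psi> (E``{h})" using s by (metis someI_ex)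
      then have "(u, SOME s. s \<in> \<psi> (E``{h})) \<in> F" "(u, s) \<in> F" using u s by auto
      moreover have V: "\<And>p q. (p,q) \<in> F \<Longrightarrow> p w = q w" using w(1) unfolding Vset_def by blast
      ultimately show ?thesis unfolding \<phi>_def by (metis V)
    qed
    have cls2: "\<phi> h = s w" if h: "h \<in> trat" and s: "s \<in> F``{u}" and u: "\<psi> (E``{h}) = F``{u}" for h s u
      using cls[OF h] s u by simp
    have const: "\<phi> (\<lambda>_. t) = t" if "t \<noteq> \<infinity>" for t
    proof -
      have c: "(\<lambda>_::real^'n. t) \<in> trat" "(\<lambda>_::real^'m. t) \<in> trat" using const_trat that by auto
      have "\<psi> (E``{\<lambda>_. t}) = F``{\<lambda>_. t}" using hom that unfolding trop_alg_hom_def by blast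
      then show ?thesis using cls2[OF c(1) equiv_class_self[OF eqF c(2)]] by simp
    qed
    have some_in: "(SOME s. s \<in> \<psi> (E``{h})) \<in> \<psi> (E``{h})" "(SOME s. s \<in> \<psi> (E``{h})) \<in> trat" if h: "h \<in> trat" for h
    proof -
      have "\<psi> (E``{h}) \<in> trat // F" using maps quotientI[OF h] by blast
      then have "\<psi> (E``{h}) \<noteq> {}" "\<psi> (E``{h}) \<subseteq> trat"
        using in_quotient_imp_non_empty[OF eqF] in_quotient_imp_subset[OF eqF] by auto
      then show "(SOME s. s \<in> \<psi> (E``{h})) \<in> \<psi> (E``{h})" "(SOME s. s \<in> \<psi> (E``{h})) \<in> trat"
        by (metis someI_ex ex_in_conv subsetD)+
    qed
    have phi_some: "\<phi> h = (SOME s. s \<in> \<psi> (E``{h})) w" for h unfolding \<phi>_def ..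
    have add: "\<phi> (tadd a b) = max (\<phi> a) (\<phi> b)" and mul: "\<phi> (tmul a b) = \<phi> a + \<phi> b"
      if a: "a \<in> trat" and b: "b \<in> trat" for a b
    proof -
      let ?y = "SOME s. s \<in> \<psi> (E``{a})" and ?z = "SOME s. s \<in> \<psi> (E``{b})"
      have h1: "\<psi> (E``{tadd a b}) = F``{tadd ?y ?z}" "\<psi> (E``{tmul a b}) = F``{tmul ?y ?z}"
        using hom a b some_in[OF a] some_in[OF b] unfolding trop_alg_hom_def by blast+
      have c1: "tadd ?y ?z \<in> F``{tadd ?y ?z}" "tmul ?y ?z \<in> F``{tmul ?y ?z}"
        using cong_closed[OF cF some_in(2)[OF a] some_in(2)[OF b]] by auto
      show "\<phi> (tadd a b) = max (\<phi> a) (\<phi> b)"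
        using cls2[OF cong_closed(1)[OF cE a b] c1(1) h1(1)] by (simp add: tadd_def phi_some)
      show "\<phi> (tmul a b) = \<phi> a + \<phi> b"
        using cls2[OF cong_closed(2)[OF cE a b] c1(2) h1(2)] by (simp add: tmul_def phi_some)
    qed
    have fin: "\<phi> a \<noteq> \<infinity>" if a: "a \<in> trat" for a
      using trat_val[OF some_in(2)[OF a]] by (simp add: phi_some)
    obtain x where x: "\<forall>h\<in>trat. \<phi> h = h x"
      using eval_point[of \<phi>, OF const add mul fin] by blast
    have "x \<in> Vset E"
      unfolding Vset_def
    proof (intro CollectI ballI, clarify)
      fix f' g' assume "(f', g') \<in> E"
      then have "f' \<in> trat" "g' \<in> trat" "E``{f'} = E``{g'}"
        using equiv_class_eq_iff[OF eqE] by auto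
      then show "f' x = g' x" using x by (metis phi_some)
    qed
    then have "f x = g x" using agree by blast
    moreover have "\<phi> f = y w" using cls[OF f] y(2) equiv_class_self[OF eqF y(1)] by simp
    moreover have "\<phi> g = z w" using cls[OF g] z(2) equiv_class_self[OF eqF z(1)] by simp
    ultimately show False using x f g w(2) by simp
  qed
qed

lemma inv_hom:
  fixes E :: "('n::finite tfun \<times> 'n tfun) set" and F :: "('m::finite tfun \<times> 'm tfun) set"
  assumes cE: "trop_congruence E" and cF: "trop_congruence F" and hom: "trop_alg_hom E F \<psi>"
    and bij: "bij_betw \<psi> (trat // E) (trat // F)"
  shows "trop_alg_hom F E (inv_into (trat // E) \<psi>) \<and> inj_on (inv_into (trat // E) \<psi>) (trat // F)"
proof -
  let ?g = "inv_into (trat // E) \<psi>"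
  have eqE: "equiv trat E" using cE unfolding trop_congruence_def by blast
  have eqF: "equiv trat F" using cF unfolding trop_congruence_def by blast
  have bij': "bij_betw ?g (trat // F) (trat // E)" using bij by (rule bij_betw_inv_into)
  have inj: "inj_on \<psi> (trat // E)" using bij by (rule bij_betw_imp_inj_on)
  have bk: "?g (\<psi> X) = X" if "X \<in> trat // E" for X using inv_into_f_f[OF inj that] .
  have fwd: "\<psi> (?g Y) = Y" if "Y \<in> trat // F" for Y
    using f_inv_into_f[of Y \<psi>] that bij unfolding bij_betw_def by blast
  have cls: "?g (F``{a}) = E``{y}" "y \<in> trat" if a: "a \<in> trat" and y: "y \<in> ?g (F``{a})" for a y
  proof -
    have "?g (F``{a}) \<in> trat // E" using bij' quotientI[OF a] by (metis bij_betwE)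
    then obtain y0 where y0: "y0 \<in> trat" "?g (F``{a}) = E``{y0}" by (metis quotientE)
    then have "(y0, y) \<in> E" using y by auto
    then show "?g (F``{a}) = E``{y}" "y \<in> trat" using y0 equiv_class_eq[OF eqE] equiv_type[OF eqE] by auto
  qed
  have main: "?g (F``{tadd a b}) = E``{tadd y z} \<and> ?g (F``{tmul a b}) = E``{tmul y z}"
    if a: "a \<in> trat" and b: "b \<in> trat" and y: "y \<in> ?g (F``{a})" and z: "z \<in> ?g (F``{b})" for a b y z
  proof -
    have yc: "E``{y} = ?g (F``{a})" "y \<in> trat" using cls[OF a y] by auto
    have zc: "E``{z} = ?g (F``{b})" "z \<in> trat" using cls[OF b z] by auto
    have py: "\<psi> (E``{y}) = F``{a}" using yc fwd quotientI[OF a] by simp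
    have pz: "\<psi> (E``{z}) = F``{b}" using zc fwd quotientI[OF b] by simp
    have aa: "a \<in> \<psi> (E``{y})" "b \<in> \<psi> (E``{z})"
      using py pz equiv_class_self[OF eqF a] equiv_class_self[OF eqF b] by auto
    have h: "\<psi> (E``{tadd y z}) = F``{tadd a b}" "\<psi> (E``{tmul y z}) = F``{tmul a b}"
      using hom yc(2) zc(2) aa unfolding trop_alg_hom_def by blast+
    show ?thesis using h bk quotientI cong_closed[OF cE yc(2) zc(2)] by metis
  qed
  have const: "?g (F``{\<lambda>_. t}) = E``{\<lambda>_. t}" if "t \<noteq> \<infinity>" for t
  proof -
    have "\<psi> (E``{\<lambda>_. t}) = F``{\<lambda>_. t}" using hom that unfolding trop_alg_hom_def by blast
    then show ?thesis using bk quotientI[OF const_trat[OF that]] by metis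
  qed
  have maps: "?g \<in> trat // F \<rightarrow> trat // E" using bij' by (auto dest: bij_betwE)
  show ?thesis unfolding trop_alg_hom_def
    using maps const main bij_betw_imp_inj_on[OF bij'] by blast
qed

theorem corollary3p16:
  fixes E :: "('n::finite tfun \<times> 'n tfun) set"
    and F :: "('m::finite tfun \<times> 'm tfun) set"
  assumes "trop_congruence E" and "trop_congruence F"
  shows "(\<forall>\<psi>. trop_alg_hom E F \<psi> \<and> inj_on \<psi> (trat // E) \<and> F = Eset (Vset F)
            \<longrightarrow> E = Eset (Vset E)) \<and>
         ((\<exists>\<psi>. trop_alg_hom E F \<psi> \<and> bij_betw \<psi> (trat // E) (trat // F))
            \<longrightarrow> (E = Eset (Vset E) \<longleftrightarrow> F = Eset (Vset F)))"
proof (intro conjI allI impI)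
  fix \<psi> assume "trop_alg_hom E F \<psi> \<and> inj_on \<psi> (trat // E) \<and> F = Eset (Vset F)"
  then show "E = Eset (Vset E)" using part1[OF assms] by blast
next
  assume "\<exists>\<psi>. trop_alg_hom E F \<psi> \<and> bij_betw \<psi> (trat // E) (trat // F)"
  then obtain \<psi> where h: "trop_alg_hom E F \<psi>" "bij_betw \<psi> (trat // E) (trat // F)" by blast
  show "E = Eset (Vset E) \<longleftrightarrow> F = Eset (Vset F)"
  proof
    assume "E = Eset (Vset E)"
    then show "F = Eset (Vset F)"
      using part1[OF assms(2,1)] inv_hom[OF assms h] by blast
  next
    assume "F = Eset (Vset F)"
    then show "E = Eset (Vset E)"
      using part1[OF assms h(1) bij_betw_imp_inj_on[OF h(2)]] by blast
  qed
qed

end
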